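(* Let $d\ge2$, $0<\gamma<1$, and let $D\subset\mathbb{R}^d$ be a $C^{1+\gamma}$ domain with defining function $\Phi$. If $\delta>0$ satisfies $$\delta^\gamma\frac{\|\nabla\Phi\|_\gamma}{|\nabla\Phi|_{\inf}}\le\frac12,$$ then for each $x\in\partial D$, the set $\partial D\cap B(x,\delta)$ is, after a rotation around $x$, the graph of a $C^{1+\gamma}$ function (of $d-1$ variables), and $D\cap B(x,\delta)$ is the part of $B(x,\delta)$ lying below this graph.
   Context: A defining function is $\Phi\in C^{1+\gamma}(\mathbb{R}^d)$ with $D=\{\Phi<0\}$, $\partial D=\{\Phi=0\}$ and $\nabla\Phi\ne0$ on $\partial D$. $|\nabla\Phi|_{\inf}=\inf_{x\in\partial D}|\nabla\Phi(x)|$ and $\|\nabla\Phi\|_\gamma=\sup_{x_1\ne x_2}|\nabla\Phi(x_1)-\nabla\Phi(x_2)|/|x_1-x_2|^\gamma$. *)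

theory Defs
  imports "HOL-Analysis.Analysis"
begin

definition holder_seminorm :: "('a::metric_space \<Rightarrow> 'b::real_normed_vector) \<Rightarrow> real \<Rightarrow> real" where
  "holder_seminorm G \<gamma> =
     (SUP p \<in> {(x1, x2). x1 \<noteq> x2}. norm (G (fst p) - G (snd p)) / (dist (fst p) (snd p) powr \<gamma>))"

definition holder_bounded :: "('a::metric_space \<Rightarrow> 'b::real_normed_vector) \<Rightarrow> real \<Rightarrow> bool" where
  "holder_bounded G \<gamma> \<longleftrightarrow>
     bdd_above ((\<lambda>p. norm (G (fst p) - G (snd p)) / (dist (fst p) (snd p) powr \<gamma>)) ` {(x1, x2). x1 \<noteq> x2})"

definition grad_inf :: "('a \<Rightarrow> 'b::real_normed_vector) \<Rightarrow> 'a set \<Rightarrow> real" where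
  "grad_inf G B = (INF x \<in> B. norm (G x))"

definition C1_holder_on :: "('a::real_inner \<Rightarrow> real) \<Rightarrow> real \<Rightarrow> 'a set \<Rightarrow> bool" where
  "C1_holder_on g \<gamma> U \<longleftrightarrow> open U \<and>
     (\<exists>Gg C. (\<forall>z\<in>U. (g has_derivative (\<lambda>h. Gg z \<bullet> h)) (at z)) \<and>
            (\<forall>z1\<in>U. \<forall>z2\<in>U. norm (Gg z1 - Gg z2) \<le> C * dist z1 z2 powr \<gamma>))"

end

theory Submission
  imports Defs
begin


definition Pk :: "'n \<Rightarrow> real^'n \<Rightarrow> real^'n" where
  "Pk k z = z - (z$k) *\<^sub>R axis k 1"

lemma Pk_nth: "Pk k z $ i = (if i = k then 0 else z $ i)"
  by (simp add: Pk_def axis_def)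

lemma Pk_k [simp]: "Pk k z $ k = 0"
  by (simp add: Pk_nth)

lemma Pk_decomp: "Pk k z + (z$k) *\<^sub>R axis k 1 = z"
  by (simp add: Pk_def)

lemma Pk_line [simp]: "Pk k (Pk k z + t *\<^sub>R axis k 1) = Pk k z"
  by (simp add: vec_eq_iff Pk_nth axis_def)

lemma Pk_line_nth [simp]: "(Pk k z + t *\<^sub>R axis k 1) $ k = t"
  by simp

lemma Pk_inner_axis [simp]: "Pk k z \<bullet> axis k 1 = 0"
  by (simp add: inner_axis)

lemma Pk_linear: "linear (Pk k)"
  by (rule linearI) (simp_all add: Pk_def algebra_simps)

lemma Pk_diff: "Pk k (a - b) = Pk k a - Pk k b"
  by (simp add: Pk_def algebra_simps)

lemma Pk_self_adj: "a \<bullet> Pk k h = Pk k a \<bullet> h"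
  by (simp add: Pk_def inner_diff_right inner_diff_left inner_axis inner_axis')

lemma norm_line_sq: "norm (Pk k z + t *\<^sub>R axis k 1)^2 = norm (Pk k z)^2 + t^2"
proof -
  have "norm (Pk k z + t *\<^sub>R axis k 1)^2 = (Pk k z + t *\<^sub>R axis k 1) \<bullet> (Pk k z + t *\<^sub>R axis k 1)"
    by (rule power2_norm_eq_inner)
  also have "\<dots> = Pk k z \<bullet> Pk k z + t^2"
    by (simp add: inner_add_left inner_add_right inner_axis inner_axis' power2_eq_square)
  finally show ?thesis by (simp only: dot_square_norm)
qed

lemma norm_Pk_le: "norm (Pk k z) \<le> norm z"
proof -
  have "norm z ^2 = norm (Pk k z)^2 + (z$k)^2"
    using norm_line_sq[of k z "z$k"] by (simp add: Pk_decomp)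
  then have "norm (Pk k z)^2 \<le> norm z ^2" by simp
  then show ?thesis using power2_le_imp_le norm_ge_zero by blast
qed

lemma Pk_cyl: "(\<forall>i. i \<noteq> k \<longrightarrow> z $ i = w $ i) \<Longrightarrow> Pk k z = Pk k w"
  by (simp add: vec_eq_iff Pk_nth)

lemma Pk_cont: "continuous_on S (Pk k)"
  using Pk_linear linear_continuous_on linear_conv_bounded_linear by blast



definition Uset :: "(real^'n \<Rightarrow> real) \<Rightarrow> 'n \<Rightarrow> real \<Rightarrow> (real^'n) set" where
  "Uset \<Psi> k \<delta> = {z. \<exists>t. Pk k z + t *\<^sub>R axis k 1 \<in> ball 0 \<delta> \<and> \<Psi> (Pk k z + t *\<^sub>R axis k 1) = 0}"

definition gfun :: "(real^'n \<Rightarrow> real) \<Rightarrow> 'n \<Rightarrow> real \<Rightarrow> real^'n \<Rightarrow> real" where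
  "gfun \<Psi> k \<delta> z = (if z \<in> Uset \<Psi> k \<delta>
      then (THE t. Pk k z + t *\<^sub>R axis k 1 \<in> ball 0 \<delta> \<and> \<Psi> (Pk k z + t *\<^sub>R axis k 1) = 0)
      else if \<Psi> (Pk k z) < 0 then \<delta> else -\<delta>)"

definition Ggfun :: "(real^'n \<Rightarrow> real) \<Rightarrow> (real^'n \<Rightarrow> real^'n) \<Rightarrow> 'n \<Rightarrow> real \<Rightarrow> real^'n \<Rightarrow> real^'n" where
  "Ggfun \<Psi> GP k \<delta> z = (let A = GP (Pk k z + gfun \<Psi> k \<delta> z *\<^sub>R axis k 1) in -(1 / A$k) *\<^sub>R Pk k A)"

locale graphloc =
  fixes \<Psi> :: "real^'n \<Rightarrow> real" and GP :: "real^'n \<Rightarrow> real^'n" and k :: 'n and \<delta> c0 H \<gamma> :: real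
  assumes der: "\<And>z. (\<Psi> has_derivative (\<lambda>h. GP z \<bullet> h)) (at z)"
    and dpos: "\<delta> > 0" and c0pos: "c0 > 0" and Hnn: "H \<ge> 0" and gpos: "0 < \<gamma>" and gle: "\<gamma> \<le> 1"
    and lowk: "\<And>z. z \<in> ball 0 \<delta> \<Longrightarrow> GP z $ k \<ge> c0"
    and upn: "\<And>z. z \<in> ball 0 \<delta> \<Longrightarrow> norm (GP z) \<le> 3*c0"
    and hol: "\<And>z1 z2. z1 \<in> ball 0 \<delta> \<Longrightarrow> z2 \<in> ball 0 \<delta> \<Longrightarrow> norm (GP z1 - GP z2) \<le> H * dist z1 z2 powr \<gamma>"


context graphloc
begin

lemma contPsi: "continuous_on S \<Psi>"
  by (intro continuous_at_imp_continuous_on ballI has_derivative_continuous[OF der])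

lemma seg_ball:
  fixes a b :: "real^'n"
  assumes a: "a \<in> ball 0 \<delta>" and b: "b \<in> ball 0 \<delta>" and u: "0 \<le> u" "u \<le> 1"
  shows "a + u *\<^sub>R (b - a) \<in> ball 0 \<delta>"
proof -
  have "a + u *\<^sub>R (b - a) = (1-u) *\<^sub>R a + u *\<^sub>R b" by (simp add: algebra_simps)
  then show ?thesis using convexD[OF convex_ball a b, of "1-u" u] u by simp
qed

lemma deriv_line: "((\<lambda>\<tau>. \<Psi> (a + \<tau> *\<^sub>R v)) has_real_derivative (GP (a + \<tau> *\<^sub>R v) \<bullet> v)) (at \<tau>)"
proof -
  have "((\<lambda>\<tau>. a + \<tau> *\<^sub>R v) has_derivative (\<lambda>h. h *\<^sub>R v)) (at \<tau>)"
    by (auto intro!: derivative_eq_intros)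
  from has_derivative_compose[OF this der]
  have "((\<lambda>\<tau>. \<Psi> (a + \<tau> *\<^sub>R v)) has_derivative (\<lambda>h. GP (a + \<tau> *\<^sub>R v) \<bullet> (h *\<^sub>R v))) (at \<tau>)" .
  moreover have "(\<lambda>h. GP (a + \<tau> *\<^sub>R v) \<bullet> (h *\<^sub>R v)) = (*) (GP (a + \<tau> *\<^sub>R v) \<bullet> v)"
    by (auto simp: fun_eq_iff)
  ultimately show ?thesis by (simp add: has_field_derivative_def)
qed

lemma mono_line:
  assumes a: "a \<in> ball 0 \<delta>" and b: "a + t *\<^sub>R axis k 1 \<in> ball 0 \<delta>" and t: "t \<ge> 0"
  shows "\<Psi> (a + t *\<^sub>R axis k 1) - \<Psi> a \<ge> c0 * t"
proof (cases "t = 0")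
  case True then show ?thesis by simp
next
  case False
  then have tp: "t > 0" using t by simp
  from MVT2[OF tp, of "\<lambda>\<tau>. \<Psi> (a + \<tau> *\<^sub>R axis k 1)" "\<lambda>\<tau>. GP (a + \<tau> *\<^sub>R axis k 1) \<bullet> axis k 1", OF deriv_line]
  obtain \<xi> where xi: "0 < \<xi>" "\<xi> < t"
    and eq: "\<Psi> (a + t *\<^sub>R axis k 1) - \<Psi> a = t * (GP (a + \<xi> *\<^sub>R axis k 1) \<bullet> axis k 1)"
    by auto
  have u: "0 \<le> \<xi>/t" "\<xi>/t \<le> 1" using xi tp by auto
  have "a + (\<xi>/t) *\<^sub>R ((a + t *\<^sub>R axis k 1) - a) \<in> ball 0 \<delta>"
    by (rule seg_ball[OF a b u])
  then have "a + \<xi> *\<^sub>R axis k 1 \<in> ball 0 \<delta>" using tp by simp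
  then have "GP (a + \<xi> *\<^sub>R axis k 1) $ k \<ge> c0" using lowk by blast
  then have "GP (a + \<xi> *\<^sub>R axis k 1) \<bullet> axis k 1 \<ge> c0" by (simp add: inner_axis)
  then have "t * c0 \<le> t * (GP (a + \<xi> *\<^sub>R axis k 1) \<bullet> axis k 1)"
    using tp by (intro mult_left_mono) auto
  then show ?thesis using eq by (simp add: mult.commute)
qed

lemma strict_line:
  assumes "p + s *\<^sub>R axis k 1 \<in> ball 0 \<delta>" "p + t *\<^sub>R axis k 1 \<in> ball 0 \<delta>" "s < t"
  shows "\<Psi> (p + s *\<^sub>R axis k 1) < \<Psi> (p + t *\<^sub>R axis k 1)"
proof -
  have eq: "(p + s *\<^sub>R axis k 1) + (t - s) *\<^sub>R axis k 1 = p + t *\<^sub>R axis k 1"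
    by (simp add: algebra_simps)
  have "\<Psi> (p + t *\<^sub>R axis k 1) - \<Psi> (p + s *\<^sub>R axis k 1) \<ge> c0 * (t - s)"
    using mono_line[of "p + s *\<^sub>R axis k 1" "t-s", unfolded eq] assms by simp
  moreover have "c0 * (t - s) > 0" using assms c0pos by simp
  ultimately show ?thesis by simp
qed

lemma lip:
  assumes a: "a \<in> ball 0 \<delta>" and b: "b \<in> ball 0 \<delta>" and eq0: "\<Psi> a = \<Psi> b"
  shows "\<bar>b$k - a$k\<bar> \<le> 3 * norm (Pk k (b - a))"
proof -
  have zo: "(0::real) < 1" by simp
  from MVT2[OF zo, of "\<lambda>\<tau>. \<Psi> (a + \<tau> *\<^sub>R (b - a))" "\<lambda>\<tau>. GP (a + \<tau> *\<^sub>R (b - a)) \<bullet> (b - a)", OF deriv_line]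
  obtain \<xi> where xi: "0 < \<xi>" "\<xi> < 1"
    and eq: "\<Psi> b - \<Psi> a = GP (a + \<xi> *\<^sub>R (b - a)) \<bullet> (b - a)"
    by auto
  define A where "A = GP (a + \<xi> *\<^sub>R (b - a))"
  have inb: "a + \<xi> *\<^sub>R (b - a) \<in> ball 0 \<delta>" by (rule seg_ball[OF a b]) (use xi in auto)
  have Ak: "A $ k \<ge> c0" using lowk[OF inb] by (simp add: A_def)
  have An: "norm A \<le> 3 * c0" using upn[OF inb] by (simp add: A_def)
  have "A \<bullet> (b - a) = 0" using eq eq0 by (simp add: A_def)
  moreover have "A \<bullet> (Pk k (b - a) + (b - a)$k *\<^sub>R axis k 1) = A \<bullet> Pk k (b - a) + (b - a)$k * A$k"
    by (simp add: inner_add_right inner_axis)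
  ultimately have "A \<bullet> Pk k (b - a) + (b - a)$k * A$k = 0" by (simp only: Pk_decomp)
  then have "\<bar>(b - a)$k * A$k\<bar> = \<bar>A \<bullet> Pk k (b - a)\<bar>" by linarith
  moreover have "\<bar>A$k\<bar> = A$k" using Ak c0pos by simp
  ultimately have e2: "\<bar>(b - a)$k\<bar> * A$k = \<bar>A \<bullet> Pk k (b - a)\<bar>" by (simp add: abs_mult)
  have "\<bar>(b - a)$k\<bar> * c0 \<le> \<bar>(b - a)$k\<bar> * A$k" using Ak by (simp add: mult_left_mono)
  also have "\<dots> \<le> norm A * norm (Pk k (b - a))" using e2 Cauchy_Schwarz_ineq2 by simp
  also have "\<dots> \<le> 3 * c0 * norm (Pk k (b - a))" using An by (simp add: mult_right_mono)
  finally have "\<bar>(b - a)$k\<bar> * c0 \<le> (3 * norm (Pk k (b - a))) * c0" by (simp add: mult_ac)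
  then have "\<bar>(b - a)$k\<bar> \<le> 3 * norm (Pk k (b - a))" using c0pos by simp
  then show ?thesis by simp
qed

end


context graphloc
begin

lemma ivt_line:
  assumes st: "s \<le> t"
    and sg: "(\<Psi> (p + s *\<^sub>R axis k 1) \<le> 0 \<and> 0 \<le> \<Psi> (p + t *\<^sub>R axis k 1)) \<or>
             (0 \<le> \<Psi> (p + s *\<^sub>R axis k 1) \<and> \<Psi> (p + t *\<^sub>R axis k 1) \<le> 0)"
  shows "\<exists>\<tau>. s \<le> \<tau> \<and> \<tau> \<le> t \<and> \<Psi> (p + \<tau> *\<^sub>R axis k 1) = 0"
proof -
  have c: "continuous_on {s..t} (\<lambda>\<tau>. \<Psi> (p + \<tau> *\<^sub>R axis k 1))"
    by (rule continuous_on_compose2[OF contPsi[of UNIV]]) (auto intro!: continuous_intros)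
  show ?thesis
  proof (cases "\<Psi> (p + s *\<^sub>R axis k 1) \<le> 0 \<and> 0 \<le> \<Psi> (p + t *\<^sub>R axis k 1)")
    case True
    then show ?thesis using IVT'[of "\<lambda>\<tau>. \<Psi> (p + \<tau> *\<^sub>R axis k 1)" s 0 t, OF _ _ st c] by auto
  next
    case False
    then have "0 \<le> \<Psi> (p + s *\<^sub>R axis k 1) \<and> \<Psi> (p + t *\<^sub>R axis k 1) \<le> 0" using sg by blast
    then show ?thesis using IVT2'[of "\<lambda>\<tau>. \<Psi> (p + \<tau> *\<^sub>R axis k 1)" t 0 s, OF _ _ st c] by auto
  qed
qed

lemma uniq:
  assumes "Pk k z + s *\<^sub>R axis k 1 \<in> ball 0 \<delta>" "\<Psi> (Pk k z + s *\<^sub>R axis k 1) = 0"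
    "Pk k z + t *\<^sub>R axis k 1 \<in> ball 0 \<delta>" "\<Psi> (Pk k z + t *\<^sub>R axis k 1) = 0"
  shows "s = t"
proof (rule ccontr)
  assume "s \<noteq> t"
  then have "s < t \<or> t < s" by linarith
  then show False
    using strict_line[of "Pk k z" s t] strict_line[of "Pk k z" t s] assms by auto
qed

lemma gU:
  assumes "z \<in> Uset \<Psi> k \<delta>"
  shows "Pk k z + gfun \<Psi> k \<delta> z *\<^sub>R axis k 1 \<in> ball 0 \<delta> \<and> \<Psi> (Pk k z + gfun \<Psi> k \<delta> z *\<^sub>R axis k 1) = 0"
proof -
  have ex: "\<exists>!t. Pk k z + t *\<^sub>R axis k 1 \<in> ball 0 \<delta> \<and> \<Psi> (Pk k z + t *\<^sub>R axis k 1) = 0"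
    using assms uniq unfolding Uset_def by blast
  have "gfun \<Psi> k \<delta> z = (THE t. Pk k z + t *\<^sub>R axis k 1 \<in> ball 0 \<delta> \<and> \<Psi> (Pk k z + t *\<^sub>R axis k 1) = 0)"
    using assms by (simp add: gfun_def)
  then show ?thesis using theI'[OF ex] by simp
qed

lemma frontier_char:
  assumes z: "z \<in> ball 0 \<delta>"
  shows "\<Psi> z = 0 \<longleftrightarrow> z \<in> Uset \<Psi> k \<delta> \<and> z $ k = gfun \<Psi> k \<delta> z"
proof
  assume 0: "\<Psi> z = 0"
  have zU: "z \<in> Uset \<Psi> k \<delta>" unfolding Uset_def using 0 z Pk_decomp[of k z] by (auto intro!: exI[of _ "z$k"])
  from gU[OF zU] have "z $ k = gfun \<Psi> k \<delta> z"
    using uniq[of z "z$k" "gfun \<Psi> k \<delta> z"] 0 z by (simp add: Pk_decomp)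
  then show "z \<in> Uset \<Psi> k \<delta> \<and> z $ k = gfun \<Psi> k \<delta> z" using zU by simp
next
  assume "z \<in> Uset \<Psi> k \<delta> \<and> z $ k = gfun \<Psi> k \<delta> z"
  then show "\<Psi> z = 0" using gU[of z] by (metis Pk_decomp)
qed

lemma Pk_ball: "z \<in> ball 0 \<delta> \<Longrightarrow> Pk k z \<in> ball 0 \<delta>"
  using norm_Pk_le[of k z] by simp

lemma line_ball:
  assumes "z \<in> ball 0 \<delta>" "\<bar>\<tau>\<bar> \<le> \<bar>z $ k\<bar>"
  shows "Pk k z + \<tau> *\<^sub>R axis k 1 \<in> ball 0 \<delta>"
proof -
  have "norm (Pk k z + \<tau> *\<^sub>R axis k 1)^2 = norm (Pk k z)^2 + \<tau>^2" by (rule norm_line_sq)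
  also have "\<dots> \<le> norm (Pk k z)^2 + (z$k)^2" using assms(2) by (simp add: abs_le_square_iff)
  also have "\<dots> = norm z ^2" using norm_line_sq[of k z "z$k"] by (simp add: Pk_decomp)
  finally have "norm (Pk k z + \<tau> *\<^sub>R axis k 1) \<le> norm z" using power2_le_imp_le norm_ge_zero by blast
  then show ?thesis using assms(1) by simp
qed

lemma neg_char:
  assumes z: "z \<in> ball 0 \<delta>"
  shows "\<Psi> z < 0 \<longleftrightarrow> z $ k < gfun \<Psi> k \<delta> z"
proof (cases "z \<in> Uset \<Psi> k \<delta>")
  case True
  define t0 where "t0 = gfun \<Psi> k \<delta> z"
  have w0: "Pk k z + t0 *\<^sub>R axis k 1 \<in> ball 0 \<delta>" "\<Psi> (Pk k z + t0 *\<^sub>R axis k 1) = 0"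
    using gU[OF True] by (auto simp: t0_def)
  have zz: "Pk k z + (z$k) *\<^sub>R axis k 1 \<in> ball 0 \<delta>" using z by (simp add: Pk_decomp)
  have "z$k < t0 \<or> z$k = t0 \<or> t0 < z$k" by linarith
  then have "\<Psi> z < 0 \<longleftrightarrow> z$k < t0"
  proof (elim disjE)
    assume "z$k < t0"
    then show ?thesis using strict_line[OF zz w0(1)] w0(2) by (simp add: Pk_decomp)
  next
    assume "z$k = t0"
    then show ?thesis using w0(2) by (metis Pk_decomp less_irrefl)
  next
    assume "t0 < z$k"
    then show ?thesis using strict_line[OF w0(1) zz] w0(2) by (simp add: Pk_decomp)
  qed
  then show ?thesis by (simp add: t0_def)
next
  case False
  have P0: "\<Psi> (Pk k z) \<noteq> 0"
  proof
    assume "\<Psi> (Pk k z) = 0"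
    then have "z \<in> Uset \<Psi> k \<delta>" unfolding Uset_def using Pk_ball[OF z] by (auto intro!: exI[of _ 0])
    then show False using False by simp
  qed
  have Z0: "\<Psi> z \<noteq> 0" using frontier_char[OF z] False by simp
  have same: "\<Psi> (Pk k z) < 0 \<longleftrightarrow> \<Psi> z < 0"
  proof (rule ccontr)
    assume ne: "\<not> (\<Psi> (Pk k z) < 0 \<longleftrightarrow> \<Psi> z < 0)"
    have e0: "\<Psi> (Pk k z + 0 *\<^sub>R axis k 1) = \<Psi> (Pk k z)" by simp
    have e1: "\<Psi> (Pk k z + (z$k) *\<^sub>R axis k 1) = \<Psi> z" by (simp add: Pk_decomp)
    have sg: "(\<Psi> (Pk k z) \<le> 0 \<and> 0 \<le> \<Psi> z) \<or> (0 \<le> \<Psi> (Pk k z) \<and> \<Psi> z \<le> 0)"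
      using ne P0 Z0 by linarith
    obtain \<tau> where tau: "\<bar>\<tau>\<bar> \<le> \<bar>z$k\<bar>" "\<Psi> (Pk k z + \<tau> *\<^sub>R axis k 1) = 0"
    proof (cases "0 \<le> z$k")
      case True
      from ivt_line[of 0 "z$k" "Pk k z", unfolded e0 e1, OF True sg]
      obtain \<tau> where "0 \<le> \<tau>" "\<tau> \<le> z$k" "\<Psi> (Pk k z + \<tau> *\<^sub>R axis k 1) = 0" by blast
      then show ?thesis by (intro that[of \<tau>]) auto
    next
      case False
      then have le: "z$k \<le> 0" by simp
      from sg have sg': "(\<Psi> z \<le> 0 \<and> 0 \<le> \<Psi> (Pk k z)) \<or> (0 \<le> \<Psi> z \<and> \<Psi> (Pk k z) \<le> 0)" by blast
      from ivt_line[of "z$k" 0 "Pk k z", unfolded e0 e1, OF le sg']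
      obtain \<tau> where "z$k \<le> \<tau>" "\<tau> \<le> 0" "\<Psi> (Pk k z + \<tau> *\<^sub>R axis k 1) = 0" by blast
      then show ?thesis by (intro that[of \<tau>]) auto
    qed
    have "z \<in> Uset \<Psi> k \<delta>" unfolding Uset_def using tau line_ball[OF z tau(1)] by blast
    then show False using False by simp
  qed
  have zk: "\<bar>z$k\<bar> < \<delta>" using component_le_norm_cart[of z k] z by simp
  show ?thesis
  proof (cases "\<Psi> (Pk k z) < 0")
    case True
    then show ?thesis using same False zk by (simp add: gfun_def)
  next
    case F2: False
    then show ?thesis using same False zk by (simp add: gfun_def)
  qed
qed

lemma cyl:
  assumes "\<forall>i. i \<noteq> k \<longrightarrow> z $ i = w $ i"
  shows "gfun \<Psi> k \<delta> z = gfun \<Psi> k \<delta> w \<and> (z \<in> Uset \<Psi> k \<delta> \<longleftrightarrow> w \<in> Uset \<Psi> k \<delta>)"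
proof -
  have e: "Pk k z = Pk k w" by (rule Pk_cyl[OF assms])
  have "z \<in> Uset \<Psi> k \<delta> \<longleftrightarrow> w \<in> Uset \<Psi> k \<delta>" by (simp add: Uset_def e)
  then show ?thesis by (simp add: gfun_def e)
qed

end


lemma Pk_cont' [continuous_intros]: "continuous_on S f \<Longrightarrow> continuous_on S (\<lambda>x. Pk k (f x))"
  by (rule continuous_on_compose2[OF Pk_cont[of UNIV]]) auto

lemma line_norm_mono:
  assumes "\<bar>\<tau>\<bar> \<le> \<bar>s\<bar>"
  shows "norm (Pk k z + \<tau> *\<^sub>R axis k 1) \<le> norm (Pk k z + s *\<^sub>R axis k 1)"
proof -
  have "norm (Pk k z + \<tau> *\<^sub>R axis k 1)^2 = norm (Pk k z)^2 + \<tau>^2" by (rule norm_line_sq)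
  also have "\<dots> \<le> norm (Pk k z)^2 + s^2" using assms by (simp add: abs_le_square_iff)
  also have "\<dots> = norm (Pk k z + s *\<^sub>R axis k 1)^2" by (simp add: norm_line_sq)
  finally show ?thesis using power2_le_imp_le norm_ge_zero by blast
qed

context graphloc
begin

lemma Psi_cont' [continuous_intros]: "continuous_on S f \<Longrightarrow> continuous_on S (\<lambda>x. \<Psi> (f x))"
  by (rule continuous_on_compose2[OF contPsi[of UNIV]]) auto

definition Sst :: "real \<Rightarrow> real \<Rightarrow> (real^'n) set" where
  "Sst s t = {z. norm (Pk k z + s *\<^sub>R axis k 1) < \<delta> \<and> norm (Pk k z + t *\<^sub>R axis k 1) < \<delta> \<and>
       \<Psi> (Pk k z + s *\<^sub>R axis k 1) < 0 \<and> 0 < \<Psi> (Pk k z + t *\<^sub>R axis k 1)}"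

lemma open_Sst: "open (Sst s t)"
  unfolding Sst_def
  by (intro open_Collect_conj open_Collect_less continuous_intros)

lemma Sst_sub: "s \<le> t \<Longrightarrow> Sst s t \<subseteq> Uset \<Psi> k \<delta>"
proof
  fix z assume st: "s \<le> t" and z: "z \<in> Sst s t"
  then have zz: "norm (Pk k z + s *\<^sub>R axis k 1) < \<delta>" "norm (Pk k z + t *\<^sub>R axis k 1) < \<delta>"
     "\<Psi> (Pk k z + s *\<^sub>R axis k 1) < 0" "0 < \<Psi> (Pk k z + t *\<^sub>R axis k 1)"
    by (auto simp: Sst_def)
  from ivt_line[of s t "Pk k z", OF st] zz
  obtain \<tau> where tau: "s \<le> \<tau>" "\<tau> \<le> t" "\<Psi> (Pk k z + \<tau> *\<^sub>R axis k 1) = 0" by auto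
  have "\<bar>\<tau>\<bar> \<le> \<bar>s\<bar> \<or> \<bar>\<tau>\<bar> \<le> \<bar>t\<bar>" using tau(1,2) by linarith
  then have "norm (Pk k z + \<tau> *\<^sub>R axis k 1) < \<delta>"
    using line_norm_mono[of \<tau> s k z] line_norm_mono[of \<tau> t k z] zz by fastforce
  then show "z \<in> Uset \<Psi> k \<delta>" unfolding Uset_def using tau by auto
qed

lemma U_sub: "Uset \<Psi> k \<delta> \<subseteq> (\<Union>(s,t)\<in>{(s,t). s \<le> t}. Sst s t)"
proof
  fix z assume zU: "z \<in> Uset \<Psi> k \<delta>"
  define t0 where "t0 = gfun \<Psi> k \<delta> z"
  define w0 where "w0 = Pk k z + t0 *\<^sub>R axis k 1"
  have w0: "w0 \<in> ball 0 \<delta>" "\<Psi> w0 = 0" using gU[OF zU] by (auto simp: w0_def t0_def)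
  obtain r where r: "r > 0" "ball w0 r \<subseteq> ball 0 \<delta>"
    using w0(1) open_ball[of "0::real^'n" \<delta>] open_contains_ball by blast
  define \<epsilon> where "\<epsilon> = r / 2"
  have ep: "\<epsilon> > 0" "\<epsilon> < r" using r by (auto simp: \<epsilon>_def)
  have d1: "Pk k z + (t0 - \<epsilon>) *\<^sub>R axis k 1 = w0 - \<epsilon> *\<^sub>R axis k 1"
    by (simp add: w0_def algebra_simps)
  have d2: "Pk k z + (t0 + \<epsilon>) *\<^sub>R axis k 1 = w0 + \<epsilon> *\<^sub>R axis k 1"
    by (simp add: w0_def algebra_simps)
  have "w0 - \<epsilon> *\<^sub>R axis k 1 \<in> ball w0 r" using ep by (simp add: dist_norm)
  then have b1: "Pk k z + (t0 - \<epsilon>) *\<^sub>R axis k 1 \<in> ball 0 \<delta>"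
    using r(2) unfolding d1 by blast
  have "w0 + \<epsilon> *\<^sub>R axis k 1 \<in> ball w0 r" using ep by (simp add: dist_norm)
  then have b2: "Pk k z + (t0 + \<epsilon>) *\<^sub>R axis k 1 \<in> ball 0 \<delta>"
    using r(2) unfolding d2 by blast
  have bw: "Pk k z + t0 *\<^sub>R axis k 1 \<in> ball 0 \<delta>" using w0 by (simp add: w0_def)
  have "\<Psi> (Pk k z + (t0 - \<epsilon>) *\<^sub>R axis k 1) < \<Psi> (Pk k z + t0 *\<^sub>R axis k 1)"
    by (rule strict_line[OF b1 bw]) (use ep in simp)
  moreover have "\<Psi> (Pk k z + t0 *\<^sub>R axis k 1) < \<Psi> (Pk k z + (t0 + \<epsilon>) *\<^sub>R axis k 1)"
    by (rule strict_line[OF bw b2]) (use ep in simp)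
  ultimately have "z \<in> Sst (t0 - \<epsilon>) (t0 + \<epsilon>)"
    using b1 b2 w0(2) by (simp add: Sst_def w0_def)
  moreover have "t0 - \<epsilon> \<le> t0 + \<epsilon>" using ep by simp
  ultimately show "z \<in> (\<Union>(s,t)\<in>{(s,t). s \<le> t}. Sst s t)" by blast
qed

lemma open_U: "open (Uset \<Psi> k \<delta>)"
proof -
  have "Uset \<Psi> k \<delta> = (\<Union>(s,t)\<in>{(s,t). s \<le> t}. Sst s t)"
    using U_sub Sst_sub by fastforce
  then show ?thesis using open_Sst by (auto intro!: open_UN)
qed

end


lemma Pk_minus: "Pk k (- v) = - Pk k v"
  by (simp add: Pk_def)

lemma Pk_scaleR: "Pk k (c *\<^sub>R v) = c *\<^sub>R Pk k v"
  by (simp add: Pk_def algebra_simps)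

context graphloc
begin

lemma g_deriv:
  assumes z0: "z0 \<in> Uset \<Psi> k \<delta>"
  shows "(gfun \<Psi> k \<delta> has_derivative (\<lambda>h. Ggfun \<Psi> GP k \<delta> z0 \<bullet> h)) (at z0)"
proof -
  define t0 where "t0 = gfun \<Psi> k \<delta> z0"
  define w0 where "w0 = Pk k z0 + t0 *\<^sub>R axis k 1"
  define A where "A = GP w0"
  have w0: "w0 \<in> ball 0 \<delta>" "\<Psi> w0 = 0" using gU[OF z0] by (auto simp: w0_def t0_def)
  have Ak: "A$k \<ge> c0" using lowk[OF w0(1)] by (simp add: A_def)
  have Gi: "\<And>h. Ggfun \<Psi> GP k \<delta> z0 \<bullet> h = -(A \<bullet> Pk k h) / A$k"
    by (simp add: Ggfun_def Let_def A_def w0_def t0_def Pk_self_adj)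
  show ?thesis
    unfolding has_derivative_at_alt
  proof (intro conjI allI impI)
    show "bounded_linear (\<lambda>h. Ggfun \<Psi> GP k \<delta> z0 \<bullet> h)" by (rule bounded_linear_inner_right)
    fix \<epsilon> :: real assume ep: "\<epsilon> > 0"
    have ep': "\<epsilon> * c0 / 4 > 0" using ep c0pos by simp
    from der[of w0, unfolded has_derivative_at_alt]
    have "\<forall>e>0. \<exists>d>0. \<forall>y. norm (y - w0) < d \<longrightarrow> norm (\<Psi> y - \<Psi> w0 - GP w0 \<bullet> (y - w0)) \<le> e * norm (y - w0)"
      by (rule conjunct2)
    from this[rule_format, OF ep']
    obtain d1 where d1: "d1 > 0" "\<And>y. norm (y - w0) < d1 \<Longrightarrow> norm (\<Psi> y - \<Psi> w0 - GP w0 \<bullet> (y - w0)) \<le> (\<epsilon> * c0 / 4) * norm (y - w0)"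
      by blast
    obtain d2 where d2: "d2 > 0" "ball z0 d2 \<subseteq> Uset \<Psi> k \<delta>"
      using open_U z0 open_contains_ball by blast
    show "\<exists>d>0. \<forall>y. norm (y - z0) < d \<longrightarrow>
        norm (gfun \<Psi> k \<delta> y - gfun \<Psi> k \<delta> z0 - Ggfun \<Psi> GP k \<delta> z0 \<bullet> (y - z0)) \<le> \<epsilon> * norm (y - z0)"
    proof (intro exI[of _ "min (d1/4) d2"] conjI allI impI)
      show "min (d1/4) d2 > 0" using d1 d2 by simp
      fix z assume zd: "norm (z - z0) < min (d1/4) d2"
      have "z \<in> ball z0 d2" using zd by (simp add: dist_norm norm_minus_commute)
      then have zU: "z \<in> Uset \<Psi> k \<delta>" using d2(2) by blast
      define w where "w = Pk k z + gfun \<Psi> k \<delta> z *\<^sub>R axis k 1"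
      have w: "w \<in> ball 0 \<delta>" "\<Psi> w = 0" using gU[OF zU] by (auto simp: w_def)
      have Pw: "Pk k (w - w0) = Pk k (z - z0)" by (simp add: w_def w0_def Pk_diff)
      have wk: "w$k - w0$k = gfun \<Psi> k \<delta> z - t0" by (simp add: w_def w0_def)
      have lipz: "\<bar>gfun \<Psi> k \<delta> z - t0\<bar> \<le> 3 * norm (Pk k (z - z0))"
        using lip[OF w0(1) w(1)] w0(2) w(2) Pw wk by simp
      have nP: "norm (Pk k (z - z0)) \<le> norm (z - z0)" by (rule norm_Pk_le)
      have wd: "w - w0 = Pk k (z - z0) + (gfun \<Psi> k \<delta> z - t0) *\<^sub>R axis k 1"
        by (simp add: w_def w0_def Pk_diff algebra_simps)
      have "norm (w - w0) \<le> norm (Pk k (z - z0)) + \<bar>gfun \<Psi> k \<delta> z - t0\<bar>"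
        unfolding wd by (rule order_trans[OF norm_triangle_ineq]) simp
      then have nw: "norm (w - w0) \<le> 4 * norm (z - z0)" using lipz nP by linarith
      have "norm (z - z0) < d1 / 4" using zd by simp
      then have "norm (w - w0) < d1" using nw by linarith
      then have "\<bar>\<Psi> w - \<Psi> w0 - A \<bullet> (w - w0)\<bar> \<le> (\<epsilon> * c0 / 4) * norm (w - w0)"
        using d1(2) by (simp add: A_def)
      also have "\<dots> \<le> (\<epsilon> * c0 / 4) * (4 * norm (z - z0))"
        by (rule mult_left_mono[OF nw]) (use ep' in simp)
      finally have B: "\<bar>A \<bullet> (w - w0)\<bar> \<le> \<epsilon> * c0 * norm (z - z0)" using w(2) w0(2) by simp
      have Aw: "A \<bullet> (w - w0) = A \<bullet> Pk k (z - z0) + (gfun \<Psi> k \<delta> z - t0) * A$k"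
        unfolding wd by (simp add: inner_add_right inner_axis)
      have Apos: "A$k > 0" using Ak c0pos by simp
      have key: "gfun \<Psi> k \<delta> z - gfun \<Psi> k \<delta> z0 - Ggfun \<Psi> GP k \<delta> z0 \<bullet> (z - z0) = (A \<bullet> (w - w0)) / A$k"
        unfolding Gi Aw t0_def[symmetric] using Apos by (simp add: field_simps)
      have h1: "c0 * norm (z - z0) \<le> A$k * norm (z - z0)" using Ak by (simp add: mult_right_mono)
      have "\<epsilon> * (c0 * norm (z - z0)) \<le> \<epsilon> * (A$k * norm (z - z0))" using h1 ep by (simp add: mult_left_mono)
      then have "\<epsilon> * c0 * norm (z - z0) \<le> \<epsilon> * norm (z - z0) * A$k" by (simp add: mult_ac)
      then have C: "\<bar>A \<bullet> (w - w0)\<bar> \<le> \<epsilon> * norm (z - z0) * A$k" using B by linarith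
      have D: "\<bar>A \<bullet> (w - w0)\<bar> / A$k \<le> \<epsilon> * norm (z - z0)"
        using C unfolding pos_divide_le_eq[OF Apos] .
      show "norm (gfun \<Psi> k \<delta> z - gfun \<Psi> k \<delta> z0 - Ggfun \<Psi> GP k \<delta> z0 \<bullet> (z - z0)) \<le> \<epsilon> * norm (z - z0)"
        unfolding key real_norm_def abs_divide abs_of_pos[OF Apos] by (rule D)
    qed
  qed
qed

lemma g_holder:
  assumes z1: "z1 \<in> Uset \<Psi> k \<delta>" and z2: "z2 \<in> Uset \<Psi> k \<delta>"
  shows "norm (Ggfun \<Psi> GP k \<delta> z1 - Ggfun \<Psi> GP k \<delta> z2) \<le> (16 * H / c0) * dist z1 z2 powr \<gamma>"
proof -
  define w1 where "w1 = Pk k z1 + gfun \<Psi> k \<delta> z1 *\<^sub>R axis k 1"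
  define w2 where "w2 = Pk k z2 + gfun \<Psi> k \<delta> z2 *\<^sub>R axis k 1"
  define A1 where "A1 = GP w1"
  define A2 where "A2 = GP w2"
  define c1 where "c1 = A1$k"
  define c2 where "c2 = A2$k"
  have w1: "w1 \<in> ball 0 \<delta>" "\<Psi> w1 = 0" using gU[OF z1] by (auto simp: w1_def)
  have w2: "w2 \<in> ball 0 \<delta>" "\<Psi> w2 = 0" using gU[OF z2] by (auto simp: w2_def)
  have c1: "c1 \<ge> c0" using lowk[OF w1(1)] by (simp add: c1_def A1_def)
  have c2: "c2 \<ge> c0" using lowk[OF w2(1)] by (simp add: c2_def A2_def)
  have nA2: "norm A2 \<le> 3 * c0" using upn[OF w2(1)] by (simp add: A2_def)
  have c1p: "c1 > 0" and c2p: "c2 > 0" using c1 c2 c0pos by auto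
  have G1: "Ggfun \<Psi> GP k \<delta> z1 = Pk k (-(1/c1) *\<^sub>R A1)"
    by (simp add: Ggfun_def Let_def w1_def A1_def c1_def Pk_scaleR Pk_minus)
  have G2: "Ggfun \<Psi> GP k \<delta> z2 = Pk k (-(1/c2) *\<^sub>R A2)"
    by (simp add: Ggfun_def Let_def w2_def A2_def c2_def Pk_scaleR Pk_minus)
  have "Ggfun \<Psi> GP k \<delta> z1 - Ggfun \<Psi> GP k \<delta> z2 = Pk k (-(1/c1) *\<^sub>R A1 - (-(1/c2) *\<^sub>R A2))"
    unfolding G1 G2 Pk_diff ..
  also have "-(1/c1) *\<^sub>R A1 - (-(1/c2) *\<^sub>R A2) = -((1/c1) *\<^sub>R (A1 - A2) + (1/c1 - 1/c2) *\<^sub>R A2)"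
    by (simp add: algebra_simps)
  finally have "norm (Ggfun \<Psi> GP k \<delta> z1 - Ggfun \<Psi> GP k \<delta> z2) \<le> norm ((1/c1) *\<^sub>R (A1 - A2) + (1/c1 - 1/c2) *\<^sub>R A2)"
    using norm_Pk_le by (metis norm_minus_cancel)
  also have "\<dots> \<le> norm ((1/c1) *\<^sub>R (A1 - A2)) + norm ((1/c1 - 1/c2) *\<^sub>R A2)"
    by (rule norm_triangle_ineq)
  also have "\<dots> = norm (A1 - A2) / c1 + \<bar>1/c1 - 1/c2\<bar> * norm A2"
    using c1p by simp
  also have "\<dots> \<le> 4 * norm (A1 - A2) / c0"
  proof -
    have t1: "norm (A1 - A2) / c1 \<le> norm (A1 - A2) / c0"
      using c1 c0pos by (intro divide_left_mono) auto
    have "1/c1 - 1/c2 = (c2 - c1) / (c1 * c2)" using c1p c2p by (simp add: field_simps)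
    then have q: "\<bar>1/c1 - 1/c2\<bar> = \<bar>c2 - c1\<bar> / (c1 * c2)" using c1p c2p by (simp add: abs_divide)
    have "\<bar>c2 - c1\<bar> = \<bar>(A2 - A1)$k\<bar>" by (simp add: c1_def c2_def)
    also have "\<dots> \<le> norm (A2 - A1)" by (rule component_le_norm_cart)
    finally have dc: "\<bar>c2 - c1\<bar> \<le> norm (A1 - A2)" by (simp add: norm_minus_commute)
    have cc: "c0 * c0 \<le> c1 * c2" using c1 c2 c0pos by (intro mult_mono) auto
    have "\<bar>c2 - c1\<bar> / (c1 * c2) \<le> norm (A1 - A2) / (c0 * c0)"
      using dc cc c0pos by (intro frac_le) auto
    then have "\<bar>1/c1 - 1/c2\<bar> * norm A2 \<le> (norm (A1 - A2) / (c0 * c0)) * (3 * c0)"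
      unfolding q using nA2 by (intro mult_mono) auto
    also have "\<dots> = 3 * norm (A1 - A2) / c0" using c0pos by (simp add: field_simps)
    finally show ?thesis using t1 by simp
  qed
  also have "\<dots> \<le> 4 * (H * (4 * dist z1 z2 powr \<gamma>)) / c0"
  proof -
    have hA: "norm (A1 - A2) \<le> H * dist w1 w2 powr \<gamma>" using hol[OF w1(1) w2(1)] by (simp add: A1_def A2_def)
    have Pw: "Pk k (w1 - w2) = Pk k (z1 - z2)" by (simp add: w1_def w2_def Pk_diff)
    have wk: "w1$k - w2$k = gfun \<Psi> k \<delta> z1 - gfun \<Psi> k \<delta> z2" by (simp add: w1_def w2_def)
    have lipz: "\<bar>gfun \<Psi> k \<delta> z1 - gfun \<Psi> k \<delta> z2\<bar> \<le> 3 * norm (Pk k (z1 - z2))"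
      using lip[OF w2(1) w1(1)] w1(2) w2(2) Pw wk by simp
    have nP: "norm (Pk k (z1 - z2)) \<le> norm (z1 - z2)" by (rule norm_Pk_le)
    have wd: "w1 - w2 = Pk k (z1 - z2) + (gfun \<Psi> k \<delta> z1 - gfun \<Psi> k \<delta> z2) *\<^sub>R axis k 1"
      by (simp add: w1_def w2_def Pk_diff algebra_simps)
    have "norm (w1 - w2) \<le> norm (Pk k (z1 - z2)) + \<bar>gfun \<Psi> k \<delta> z1 - gfun \<Psi> k \<delta> z2\<bar>"
      unfolding wd by (rule order_trans[OF norm_triangle_ineq]) simp
    then have "dist w1 w2 \<le> 4 * dist z1 z2" using lipz nP by (simp add: dist_norm)
    then have "dist w1 w2 powr \<gamma> \<le> (4 * dist z1 z2) powr \<gamma>"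
      using gpos by (intro powr_mono2) auto
    also have "\<dots> = 4 powr \<gamma> * dist z1 z2 powr \<gamma>" by (simp add: powr_mult)
    also have "\<dots> \<le> 4 * dist z1 z2 powr \<gamma>"
    proof -
      have "(4::real) powr \<gamma> \<le> 4 powr 1" using gle by (intro powr_mono) auto
      then show ?thesis by (intro mult_right_mono) auto
    qed
    finally have "H * dist w1 w2 powr \<gamma> \<le> H * (4 * dist z1 z2 powr \<gamma>)"
      using Hnn by (intro mult_left_mono) auto
    with hA have "norm (A1 - A2) \<le> H * (4 * dist z1 z2 powr \<gamma>)" by linarith
    then show ?thesis using c0pos by (intro divide_right_mono) auto
  qed
  also have "\<dots> = (16 * H / c0) * dist z1 z2 powr \<gamma>" by simp
  finally show ?thesis .
qed

lemma graph_main: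
  "\<exists>g U. (\<forall>z w. (\<forall>i. i \<noteq> k \<longrightarrow> z $ i = w $ i) \<longrightarrow> g z = g w \<and> (z \<in> U \<longleftrightarrow> w \<in> U)) \<and>
     C1_holder_on g \<gamma> U \<and>
     (\<forall>z\<in>ball 0 \<delta>. \<Psi> z = 0 \<longleftrightarrow> z \<in> U \<and> z $ k = g z) \<and>
     (\<forall>z\<in>ball 0 \<delta>. \<Psi> z < 0 \<longleftrightarrow> z $ k < g z)"
proof (intro exI conjI)
  show "\<forall>z w. (\<forall>i. i \<noteq> k \<longrightarrow> z $ i = w $ i) \<longrightarrow> gfun \<Psi> k \<delta> z = gfun \<Psi> k \<delta> w \<and> (z \<in> Uset \<Psi> k \<delta> \<longleftrightarrow> w \<in> Uset \<Psi> k \<delta>)"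
    using cyl by blast
  show "C1_holder_on (gfun \<Psi> k \<delta>) \<gamma> (Uset \<Psi> k \<delta>)"
    unfolding C1_holder_on_def
    using open_U g_deriv g_holder by blast
  show "\<forall>z\<in>ball 0 \<delta>. \<Psi> z = 0 \<longleftrightarrow> z \<in> Uset \<Psi> k \<delta> \<and> z $ k = gfun \<Psi> k \<delta> z"
    using frontier_char by blast
  show "\<forall>z\<in>ball 0 \<delta>. \<Psi> z < 0 \<longleftrightarrow> z $ k < gfun \<Psi> k \<delta> z"
    using neg_char by blast
qed

end


theorem lemma6p4:
  fixes \<Phi> :: "real ^ 'n \<Rightarrow> real" and gradPhi :: "real ^ 'n \<Rightarrow> real ^ 'n"
    and D :: "(real ^ 'n) set" and \<gamma> \<delta> :: real
  assumes dim: "CARD('n) \<ge> 2"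
    and gam: "0 < \<gamma>" "\<gamma> < 1"
    and deriv: "\<And>x. (\<Phi> has_derivative (\<lambda>h. gradPhi x \<bullet> h)) (at x)"
    and hold: "holder_bounded gradPhi \<gamma>"
    and D_def: "D = {x. \<Phi> x < 0}"
    and bdry: "frontier D = {x. \<Phi> x = 0}"
    and nondeg: "\<And>x. x \<in> frontier D \<Longrightarrow> gradPhi x \<noteq> 0"
    and dom: "connected D"
    and dpos: "\<delta> > 0"
    and small: "\<delta> powr \<gamma> * holder_seminorm gradPhi \<gamma> \<le> grad_inf gradPhi (frontier D) / 2"
    and xb: "x \<in> frontier D"
  shows "\<exists>R :: real ^ 'n \<Rightarrow> real ^ 'n. \<exists>k :: 'n. \<exists>g :: real ^ 'n \<Rightarrow> real. \<exists>U.
           orthogonal_transformation R \<and> det (matrix R) = 1 \<and>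
           (\<forall>z w. (\<forall>i. i \<noteq> k \<longrightarrow> z $ i = w $ i) \<longrightarrow> g z = g w \<and> (z \<in> U \<longleftrightarrow> w \<in> U)) \<and>
           C1_holder_on g \<gamma> U \<and>
           (\<forall>y \<in> ball x \<delta>. y \<in> frontier D \<longleftrightarrow>
                 (R (y - x) \<in> U \<and> R (y - x) $ k = g (R (y - x)))) \<and>
           (\<forall>y \<in> ball x \<delta>. y \<in> D \<longleftrightarrow> R (y - x) $ k < g (R (y - x)))"
proof -
  obtain k :: 'n where True by simp
  define a0 where "a0 = gradPhi x"
  have a0nz: "a0 \<noteq> 0" using nondeg[OF xb] by (simp add: a0_def)
  define Hh where "Hh = holder_seminorm gradPhi \<gamma>"
  define F where "F = (\<lambda>p::(real^'n) \<times> (real^'n). norm (gradPhi (fst p) - gradPhi (snd p)) / (dist (fst p) (snd p) powr \<gamma>))"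
  have bdd: "bdd_above (F ` {(x1, x2). x1 \<noteq> x2})" using hold by (simp add: holder_bounded_def F_def)
  have Fle: "F (y1, y2) \<le> Hh" if "y1 \<noteq> y2" for y1 y2
  proof -
    have "(y1, y2) \<in> {(x1, x2). x1 \<noteq> x2}" using that by simp
    from cSUP_upper[OF this bdd] show ?thesis by (simp add: Hh_def holder_seminorm_def F_def)
  qed
  have holdb: "norm (gradPhi y1 - gradPhi y2) \<le> Hh * dist y1 y2 powr \<gamma>" for y1 y2
  proof (cases "y1 = y2")
    case True then show ?thesis by simp
  next
    case False
    then have dp: "dist y1 y2 powr \<gamma> > 0" by simp
    from Fle[OF False] have "norm (gradPhi y1 - gradPhi y2) / dist y1 y2 powr \<gamma> \<le> Hh" by (simp add: F_def)
    then show ?thesis using dp by (simp add: pos_divide_le_eq)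
  qed
  have Hnn: "Hh \<ge> 0"
  proof -
    have ne: "(0::real^'n) \<noteq> axis k 1" by (metis axis_nth zero_index zero_neq_one)
    have "0 \<le> F (0, axis k 1)" by (simp add: F_def)
    then show ?thesis using Fle[OF ne] by linarith
  qed
  have ginf: "grad_inf gradPhi (frontier D) \<le> norm a0"
  proof -
    have "bdd_below ((\<lambda>x. norm (gradPhi x)) ` frontier D)" by (rule bdd_belowI[of _ 0]) auto
    from cINF_lower[OF this xb] show ?thesis by (simp add: grad_inf_def a0_def)
  qed
  have Hd: "Hh * \<delta> powr \<gamma> \<le> norm a0 / 2" using small ginf by (simp add: Hh_def mult.commute)
  have near: "norm (gradPhi y - a0) \<le> norm a0 / 2" if "y \<in> ball x \<delta>" for y
  proof -
    have "dist y x powr \<gamma> \<le> \<delta> powr \<gamma>" using that gam by (intro powr_mono2) (auto simp: dist_commute)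
    then have "Hh * dist y x powr \<gamma> \<le> Hh * \<delta> powr \<gamma>" using Hnn by (rule mult_left_mono)
    then show ?thesis using holdb[of y x] Hd by (simp add: a0_def)
  qed
  define n where "n = a0 /\<^sub>R norm a0"
  have nn: "norm n = 1" using a0nz by (simp add: n_def)
  have a0n: "a0 \<bullet> n = norm a0" using a0nz by (simp add: n_def dot_square_norm power2_eq_square)
  obtain R where R: "orthogonal_transformation R" "det (matrix R) = 1" "R n = axis k 1"
    using rotation_exists[OF dim, of n "axis k 1"] nn by auto
  define Q where "Q = inv R"
  have Q: "orthogonal_transformation Q" using orthogonal_transformation_inv[OF R(1)] by (simp add: Q_def)
  have RQ: "R (Q v) = v" for v
    using orthogonal_transformation_surj[OF R(1)] by (simp add: Q_def surj_f_inv_f)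
  have QR: "Q (R v) = v" for v
    using orthogonal_transformation_inj[OF R(1)] by (simp add: Q_def inv_f_f)
  have Rinner: "R v \<bullet> R w = v \<bullet> w" for v w using R(1) by (simp add: orthogonal_transformation_def)
  have Qlin: "linear Q" using Q by (simp add: orthogonal_transformation_linear)
  have Rlin: "linear R" using R(1) by (simp add: orthogonal_transformation_linear)
  define \<Psi> where "\<Psi> = (\<lambda>z. \<Phi> (x + Q z))"
  define GPs where "GPs = (\<lambda>z. R (gradPhi (x + Q z)))"
  define c0 where "c0 = norm a0 / 2"
  have c0pos: "c0 > 0" using a0nz by (simp add: c0_def)
  have derPsi: "(\<Psi> has_derivative (\<lambda>h. GPs z \<bullet> h)) (at z)" for z
  proof -
    have "((\<lambda>z. x + Q z) has_derivative (\<lambda>h. Q h)) (at z)"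
      using Qlin by (auto intro!: derivative_eq_intros linear_imp_has_derivative)
    from has_derivative_compose[OF this deriv]
    have "(\<Psi> has_derivative (\<lambda>h. gradPhi (x + Q z) \<bullet> Q h)) (at z)" by (simp add: \<Psi>_def)
    moreover have "(\<lambda>h. gradPhi (x + Q z) \<bullet> Q h) = (\<lambda>h. GPs z \<bullet> h)"
      by (rule ext) (metis GPs_def RQ Rinner)
    ultimately show ?thesis by simp
  qed
  have inball: "x + Q z \<in> ball x \<delta>" if "z \<in> ball 0 \<delta>" for z
    using that orthogonal_transformation_norm[OF Q, of z] by (simp add: dist_norm)
  have lowk: "GPs z $ k \<ge> c0" if "z \<in> ball 0 \<delta>" for z
  proof -
    define gy where "gy = gradPhi (x + Q z)"
    have nr: "norm (gy - a0) \<le> norm a0 / 2" using near[OF inball[OF that]] by (simp add: gy_def)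
    have "GPs z $ k = R gy \<bullet> R n" by (simp add: GPs_def gy_def R(3) cart_eq_inner_axis)
    also have "\<dots> = gy \<bullet> n" by (rule Rinner)
    also have "\<dots> = a0 \<bullet> n + (gy - a0) \<bullet> n" by (simp add: inner_diff_left)
    finally have e: "GPs z $ k = norm a0 + (gy - a0) \<bullet> n" using a0n by simp
    have "\<bar>(gy - a0) \<bullet> n\<bar> \<le> norm (gy - a0) * norm n" by (rule Cauchy_Schwarz_ineq2)
    then have "\<bar>(gy - a0) \<bullet> n\<bar> \<le> norm a0 / 2" using nn nr by simp
    then show ?thesis using e by (simp add: c0_def)
  qed
  have upn: "norm (GPs z) \<le> 3 * c0" if "z \<in> ball 0 \<delta>" for z
  proof -
    define gy where "gy = gradPhi (x + Q z)"
    have nr: "norm (gy - a0) \<le> norm a0 / 2" using near[OF inball[OF that]] by (simp add: gy_def)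
    have "norm gy \<le> norm a0 + norm (gy - a0)" using norm_triangle_ineq[of a0 "gy - a0"] by simp
    moreover have "norm (GPs z) = norm gy" using orthogonal_transformation_norm[OF R(1)] by (simp add: GPs_def gy_def)
    ultimately show ?thesis using nr by (simp add: c0_def)
  qed
  have holP: "norm (GPs z1 - GPs z2) \<le> Hh * dist z1 z2 powr \<gamma>" for z1 z2
  proof -
    have "norm (GPs z1 - GPs z2) = norm (gradPhi (x + Q z1) - gradPhi (x + Q z2))"
      using orthogonal_transformation_norm[OF R(1)] linear_diff[OF Rlin] by (metis GPs_def)
    moreover have "dist (x + Q z1) (x + Q z2) = dist z1 z2"
      using orthogonal_transformation_norm[OF Q, of "z1 - z2"] linear_diff[OF Qlin, of z1 z2] by (simp add: dist_norm)
    ultimately show ?thesis using holdb[of "x + Q z1" "x + Q z2"] by simp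
  qed
  interpret graphloc \<Psi> GPs k \<delta> c0 Hh \<gamma>
    by unfold_locales (use derPsi dpos c0pos Hnn gam lowk upn holP in auto)
  obtain g U where gU: "\<forall>z w. (\<forall>i. i \<noteq> k \<longrightarrow> z $ i = w $ i) \<longrightarrow> g z = g w \<and> (z \<in> U \<longleftrightarrow> w \<in> U)"
      "C1_holder_on g \<gamma> U"
      "\<forall>z\<in>ball 0 \<delta>. \<Psi> z = 0 \<longleftrightarrow> z \<in> U \<and> z $ k = g z"
      "\<forall>z\<in>ball 0 \<delta>. \<Psi> z < 0 \<longleftrightarrow> z $ k < g z"
    using graph_main by blast
  have zb: "R (y - x) \<in> ball 0 \<delta>" "\<Psi> (R (y - x)) = \<Phi> y" if "y \<in> ball x \<delta>" for y
    using that orthogonal_transformation_norm[OF R(1), of "y - x"]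
    by (auto simp: \<Psi>_def QR dist_norm norm_minus_commute)
  show ?thesis
  proof (intro exI conjI)
    show "orthogonal_transformation R" "det (matrix R) = 1" by (rule R(1), rule R(2))
    show "\<forall>z w. (\<forall>i. i \<noteq> k \<longrightarrow> z $ i = w $ i) \<longrightarrow> g z = g w \<and> (z \<in> U \<longleftrightarrow> w \<in> U)" by (rule gU(1))
    show "C1_holder_on g \<gamma> U" by (rule gU(2))
    show "\<forall>y \<in> ball x \<delta>. y \<in> frontier D \<longleftrightarrow> (R (y - x) \<in> U \<and> R (y - x) $ k = g (R (y - x)))"
    proof
      fix y assume y: "y \<in> ball x \<delta>"
      have "\<Psi> (R (y - x)) = 0 \<longleftrightarrow> R (y - x) \<in> U \<and> R (y - x) $ k = g (R (y - x))"
        using gU(3) zb(1)[OF y] by blast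
      then show "y \<in> frontier D \<longleftrightarrow> (R (y - x) \<in> U \<and> R (y - x) $ k = g (R (y - x)))"
        using zb(2)[OF y] bdry by simp
    qed
    show "\<forall>y \<in> ball x \<delta>. y \<in> D \<longleftrightarrow> R (y - x) $ k < g (R (y - x))"
    proof
      fix y assume y: "y \<in> ball x \<delta>"
      have "\<Psi> (R (y - x)) < 0 \<longleftrightarrow> R (y - x) $ k < g (R (y - x))"
        using gU(4) zb(1)[OF y] by blast
      then show "y \<in> D \<longleftrightarrow> R (y - x) $ k < g (R (y - x))"
        using zb(2)[OF y] D_def by simp
    qed
  qed
qed


end
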